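(* Let $\ell:\mathcal{Y}\times\mathcal{Y}\to\mathbb{R}_{\ge0}$ be a loss with $\ell(y,y)=0$ for all $y$, and let $\epsilon_+\ge 0$. Then there exist a feature space $\mathcal{X}=\mathcal{X}_D\times\mathcal{X}_A\times\mathcal{X}_P$, a finite label set $\mathcal{Y}$, a probability distribution $p$ on $\mathcal{X}$, a class $\mathcal{E}$ of explanations, a black box $B:\mathcal{X}\to\mathcal{Y}$ and an explanation $E\in\mathcal{E}$ such that (i) $E$ has perfect fidelity, i.e. $L(E,B)=0$, and (ii) $E$ is potentially misleading for $B$, i.e. $\hat{\mathcal{O}}(E)\neq\hat{\mathcal{O}}^*(B)$.
   Context: Setting: the input space decomposes as $\mathcal{X}=\mathcal{X}_D\times\mathcal{X}_A\times\mathcal{X}_P$, where $\mathcal{X}_D$ is the product of the coordinates of the "desired features" $D$, $\mathcal{X}_A$ of the "ambivalent features" $A$, and $\mathcal{X}_P$ of the "prohibited features" $P$. A black box is a (measurable) function $B:\mathcal{X}\to\mathcal{Y}$; an explanation is an element of a class $\mathcal{E}$ of (measurable) functions $\mathcal{X}\to\mathcal{Y}$. For a data distribution $p$ on $\mathcal{X}$ and loss $\ell$, the relative error is $L(F,F')=\mathbb{E}_{x\sim p}[\ell(F(x),F'(x))]$, and the fidelity of $E$ is $1-L(E,B)$. A function $f:\mathcal{X}\to\mathcal{Y}$ depends on a feature coordinate $j$ if there are $x,x'\in\mathcal{X}$ differing only in coordinate $j$ with $f(x)\neq f(x')$. A function (black box or explanation) is acceptable if it depends on every desired feature and on no prohibited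 feature; $\mathcal{E}_+\subseteq\mathcal{E}$ denotes the acceptable explanations and $\mathcal{B}_+$ the acceptable black boxes. With fidelity threshold $\epsilon_+\ge0$, define $\hat{\mathcal{O}}(E)=\mathbb{I}[E\in\mathcal{E}_+\wedge L(E,B)\le\epsilon_+]$ and $\hat{\mathcal{O}}^*(B)=\mathbb{I}[B\in\mathcal{B}_+]$. An explanation $E$ of $B$ is potentially misleading if $\hat{\mathcal{O}}(E)\neq\hat{\mathcal{O}}^*(B)$. *)

theory Defs
  imports "HOL-Probability.Probability"
begin

text \<open>Inputs are extensional functions on a finite set F of feature coordinates
  (indices in nat, values in real); the input space is the product
  X = PiE F S, where F is partitioned into desired D, ambivalent A and
  prohibited P features, so X is (isomorphic to) X_D x X_A x X_P.\<close>

definition depends_on :: "(nat \<Rightarrow> real) set \<Rightarrow> ((nat \<Rightarrow> real) \<Rightarrow> 'y) \<Rightarrow> nat \<Rightarrow> bool" where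
  "depends_on X f j \<longleftrightarrow>
     (\<exists>x\<in>X. \<exists>x'\<in>X. (\<forall>i. i \<noteq> j \<longrightarrow> x i = x' i) \<and> f x \<noteq> f x')"

definition acceptable ::
  "(nat \<Rightarrow> real) set \<Rightarrow> nat set \<Rightarrow> nat set \<Rightarrow> ((nat \<Rightarrow> real) \<Rightarrow> 'y) \<Rightarrow> bool" where
  "acceptable X D P f \<longleftrightarrow> (\<forall>j\<in>D. depends_on X f j) \<and> (\<forall>j\<in>P. \<not> depends_on X f j)"

definition rel_err ::
  "(nat \<Rightarrow> real) pmf \<Rightarrow> ('y \<Rightarrow> 'y \<Rightarrow> real) \<Rightarrow> ((nat \<Rightarrow> real) \<Rightarrow> 'y) \<Rightarrow> ((nat \<Rightarrow> real) \<Rightarrow> 'y) \<Rightarrow> real" where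
  "rel_err p loss F F' = measure_pmf.expectation p (\<lambda>x. loss (F x) (F' x))"

definition O_hat ::
  "(nat \<Rightarrow> real) set \<Rightarrow> nat set \<Rightarrow> nat set \<Rightarrow> (nat \<Rightarrow> real) pmf \<Rightarrow> ('y \<Rightarrow> 'y \<Rightarrow> real) \<Rightarrow> real
   \<Rightarrow> ((nat \<Rightarrow> real) \<Rightarrow> 'y) set \<Rightarrow> ((nat \<Rightarrow> real) \<Rightarrow> 'y) \<Rightarrow> ((nat \<Rightarrow> real) \<Rightarrow> 'y) \<Rightarrow> bool" where
  "O_hat X D P p loss eps Ecls B E \<longleftrightarrow>
     (E \<in> Ecls \<and> acceptable X D P E) \<and> rel_err p loss E B \<le> eps"

definition O_star ::
  "(nat \<Rightarrow> real) set \<Rightarrow> nat set \<Rightarrow> nat set \<Rightarrow> ((nat \<Rightarrow> real) \<Rightarrow> 'y) \<Rightarrow> bool" where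
  "O_star X D P B \<longleftrightarrow> acceptable X D P B"

definition potentially_misleading ::
  "(nat \<Rightarrow> real) set \<Rightarrow> nat set \<Rightarrow> nat set \<Rightarrow> (nat \<Rightarrow> real) pmf \<Rightarrow> ('y \<Rightarrow> 'y \<Rightarrow> real) \<Rightarrow> real
   \<Rightarrow> ((nat \<Rightarrow> real) \<Rightarrow> 'y) set \<Rightarrow> ((nat \<Rightarrow> real) \<Rightarrow> 'y) \<Rightarrow> ((nat \<Rightarrow> real) \<Rightarrow> 'y) \<Rightarrow> bool" where
  "potentially_misleading X D P p loss eps Ecls B E \<longleftrightarrow>
     O_hat X D P p loss eps Ecls B E \<noteq> O_star X D P B"

end

theory Submission
  imports Defs
begin

theorem theorem1:
  fixes loss :: "nat \<Rightarrow> nat \<Rightarrow> real" and eps :: real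
  assumes "\<forall>y y'. loss y y' \<ge> 0"
    and "\<forall>y. loss y y = 0"
    and "eps \<ge> 0"
  shows "\<exists>(F::nat set) (D::nat set) (A::nat set) (P::nat set) (S::nat \<Rightarrow> real set) (Y::nat set)
            (p::(nat \<Rightarrow> real) pmf) (Ecls::((nat \<Rightarrow> real) \<Rightarrow> nat) set)
            (B::(nat \<Rightarrow> real) \<Rightarrow> nat) (E::(nat \<Rightarrow> real) \<Rightarrow> nat).
           finite F \<and> F = D \<union> A \<union> P \<and> D \<inter> A = {} \<and> D \<inter> P = {} \<and> A \<inter> P = {} \<and>
           finite Y \<and>
           set_pmf p \<subseteq> (\<Pi>\<^sub>E j\<in>F. S j) \<and>
           Ecls \<subseteq> ((\<Pi>\<^sub>E j\<in>F. S j) \<rightarrow> Y) \<and>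
           B \<in> ((\<Pi>\<^sub>E j\<in>F. S j) \<rightarrow> Y) \<and>
           E \<in> Ecls \<and>
           rel_err p loss E B = 0 \<and>
           potentially_misleading (\<Pi>\<^sub>E j\<in>F. S j) D P p loss eps Ecls B E"
proof -
  define x0 :: "nat \<Rightarrow> real" where "x0 = (\<lambda>j. if j = 0 then 0 else undefined)"
  define x1 :: "nat \<Rightarrow> real" where "x1 = (\<lambda>j. if j = 0 then 1 else undefined)"
  define S :: "nat \<Rightarrow> real set" where "S = (\<lambda>_. {0,1})"
  define B :: "(nat \<Rightarrow> real) \<Rightarrow> nat" where "B = (\<lambda>x. if x 0 = 0 then 0 else 1)"
  define E :: "(nat \<Rightarrow> real) \<Rightarrow> nat" where "E = (\<lambda>x. 0)"
  have x0: "x0 \<in> (\<Pi>\<^sub>E j\<in>{0}. S j)" by (simp add: PiE_iff x0_def S_def extensional_def)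
  have x1: "x1 \<in> (\<Pi>\<^sub>E j\<in>{0}. S j)" by (simp add: PiE_iff x1_def S_def extensional_def)
  have dep: "depends_on (\<Pi>\<^sub>E j\<in>{0}. S j) B 0"
  proof -
    have h1: "\<forall>i. i \<noteq> 0 \<longrightarrow> x0 i = x1 i" by (simp add: x0_def x1_def)
    have h2: "B x0 \<noteq> B x1" by (simp add: B_def x0_def x1_def)
    show ?thesis unfolding depends_on_def using x0 x1 h1 h2 by blast
  qed
  have ndep: "\<not> depends_on (\<Pi>\<^sub>E j\<in>{0}. S j) E 0" by (simp add: depends_on_def E_def)
  have err: "rel_err (return_pmf x0) loss E B = 0"
    using assms(2) by (simp add: rel_err_def E_def B_def x0_def)
  have pm: "potentially_misleading (\<Pi>\<^sub>E j\<in>{0}. S j) {} {0} (return_pmf x0) loss eps {E} B E"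
    using dep ndep err assms(3)
    by (simp add: potentially_misleading_def O_hat_def O_star_def acceptable_def)
  have "B \<in> ((\<Pi>\<^sub>E j\<in>{0}. S j) \<rightarrow> {0,1})" unfolding B_def by (rule funcsetI) simp
  moreover have "E \<in> ((\<Pi>\<^sub>E j\<in>{0}. S j) \<rightarrow> {0,1})" unfolding E_def by (rule funcsetI) simp
  ultimately show ?thesis using x0 err pm
    by (intro exI[of _ "{0}"] exI[of _ "{}"] exI[of _ "{}"] exI[of _ "{0}"] exI[of _ S]
        exI[of _ "{0,1}"] exI[of _ "return_pmf x0"] exI[of _ "{E}"] exI[of _ B] exI[of _ E]) simp
qed

end
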